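(* Let $p,q,s$ be complex numbers with $p\neq 0$, $q\neq 0$, $s^2\neq -1$, and let $A=A(S^4_{p,q,s})$ be the unital complex algebra generated by $\xi,\eta,\zeta,U,V$ subject to the relations $$\zeta\xi=q^2\xi\zeta,\quad \eta\zeta=q^2\zeta\eta,\quad \xi U=pU\xi,\quad V\xi=p\xi V,\quad \eta V=pV\eta,\quad U\eta=p\eta U,$$ $$UV=VU,\quad U\zeta=\zeta U,\quad V\zeta=\zeta V,$$ $$\xi\eta=(\zeta-1)(\zeta+s^2)+UV,\qquad \eta\xi=(q^2\zeta-1)(q^2\zeta+s^2)+UV.$$ Let $e\in \mathrm{Mat}_4(A)$ be $$e=\frac{1}{1+s^2}\begin{pmatrix}1-\zeta&0&U&\xi\\ 0&1-q^2\zeta&-\eta&-pV\\ V&\xi&s^2+\zeta&0\\ -\eta&-p^{-1}U&0&s^2+q^2\zeta\end{pmatrix}.$$ Then $e^2=e$. Moreover, if $q^2$ and $s^2$ are real and $|p|=1$, and $A$ is equipped with the involution determined by $\zeta^*=\zeta$, $\xi^*=-\eta$, $U^*=V$, then $e^*=e$, where $*$ on $\mathrm{Mat}_4(A)$ is the involution of $A$ applied entrywise combined with matrix transposition. *)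

theory Defs
  imports Complex_Main
begin

text \<open>A unital complex algebra: a ring 'a together with a unital ring homomorphism
  c from the complex numbers into the centre of 'a (c z is the scalar z times 1).\<close>
definition central_complex_hom :: "(complex \<Rightarrow> 'a::ring_1) \<Rightarrow> bool" where
  "central_complex_hom c \<longleftrightarrow> c 1 = 1 \<and> (\<forall>z w. c (z + w) = c z + c w)
     \<and> (\<forall>z w. c (z * w) = c z * c w) \<and> (\<forall>z x. c z * x = x * c z)"

definition S4_rels :: "(complex \<Rightarrow> 'a::ring_1) \<Rightarrow> complex \<Rightarrow> complex \<Rightarrow> complex
     \<Rightarrow> 'a \<Rightarrow> 'a \<Rightarrow> 'a \<Rightarrow> 'a \<Rightarrow> 'a \<Rightarrow> bool" where
  "S4_rels c p q s xi eta zeta U V \<longleftrightarrow>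
     zeta * xi = c (q^2) * xi * zeta \<and> eta * zeta = c (q^2) * zeta * eta \<and>
     xi * U = c p * U * xi \<and> V * xi = c p * xi * V \<and>
     eta * V = c p * V * eta \<and> U * eta = c p * eta * U \<and>
     U * V = V * U \<and> U * zeta = zeta * U \<and> V * zeta = zeta * V \<and>
     xi * eta = (zeta - 1) * (zeta + c (s^2)) + U * V \<and>
     eta * xi = (c (q^2) * zeta - 1) * (c (q^2) * zeta + c (s^2)) + U * V"

definition algebra_involution :: "(complex \<Rightarrow> 'a::ring_1) \<Rightarrow> ('a \<Rightarrow> 'a) \<Rightarrow> bool" where
  "algebra_involution c st \<longleftrightarrow> (\<forall>x y. st (x + y) = st x + st y)
     \<and> (\<forall>x y. st (x * y) = st y * st x) \<and> (\<forall>x. st (st x) = x)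
     \<and> (\<forall>z x. st (c z * x) = c (cnj z) * st x)"

text \<open>4x4 matrices over 'a, indexed by 0..3 (entries outside are irrelevant).\<close>
definition mat4_mult :: "(nat \<Rightarrow> nat \<Rightarrow> 'a::ring_1) \<Rightarrow> (nat \<Rightarrow> nat \<Rightarrow> 'a) \<Rightarrow> nat \<Rightarrow> nat \<Rightarrow> 'a" where
  "mat4_mult X Y i j = (\<Sum>k<4. X i k * Y k j)"

definition mat4_star :: "('a \<Rightarrow> 'a) \<Rightarrow> (nat \<Rightarrow> nat \<Rightarrow> 'a) \<Rightarrow> nat \<Rightarrow> nat \<Rightarrow> 'a" where
  "mat4_star st X i j = st (X j i)"

definition mat4_eq :: "(nat \<Rightarrow> nat \<Rightarrow> 'a) \<Rightarrow> (nat \<Rightarrow> nat \<Rightarrow> 'a) \<Rightarrow> bool" where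
  "mat4_eq X Y \<longleftrightarrow> (\<forall>i<4. \<forall>j<4. X i j = Y i j)"

definition S4_M :: "(complex \<Rightarrow> 'a::ring_1) \<Rightarrow> complex \<Rightarrow> complex \<Rightarrow> complex
     \<Rightarrow> 'a \<Rightarrow> 'a \<Rightarrow> 'a \<Rightarrow> 'a \<Rightarrow> 'a \<Rightarrow> nat \<Rightarrow> nat \<Rightarrow> 'a" where
  "S4_M c p q s xi eta zeta U V i j =
     [[1 - zeta, 0, U, xi],
      [0, 1 - c (q^2) * zeta, - eta, - (c p * V)],
      [V, xi, c (s^2) + zeta, 0],
      [- eta, - (c (inverse p) * U), 0, c (s^2) + c (q^2) * zeta]] ! i ! j"

definition S4_e :: "(complex \<Rightarrow> 'a::ring_1) \<Rightarrow> complex \<Rightarrow> complex \<Rightarrow> complex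
     \<Rightarrow> 'a \<Rightarrow> 'a \<Rightarrow> 'a \<Rightarrow> 'a \<Rightarrow> 'a \<Rightarrow> nat \<Rightarrow> nat \<Rightarrow> 'a" where
  "S4_e c p q s xi eta zeta U V i j =
     c (inverse (1 + s^2)) * S4_M c p q s xi eta zeta U V i j"

end

theory Submission imports Defs begin

lemma all4: "(\<forall>i<(4::nat). P i) = (P 0 \<and> P 1 \<and> P 2 \<and> P 3)"
  by (auto simp: eval_nat_numeral less_Suc_eq)

lemma sum4: "(\<Sum>k<(4::nat). f k) = f 0 + f 1 + f 2 + f 3"
  by (simp add: eval_nat_numeral add.assoc)

lemma Mval:
  "S4_M c p q s xi eta zeta U V 0 0 = 1 - zeta"
  "S4_M c p q s xi eta zeta U V 0 1 = 0"
  "S4_M c p q s xi eta zeta U V 0 2 = U"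
  "S4_M c p q s xi eta zeta U V 0 3 = xi"
  "S4_M c p q s xi eta zeta U V 1 0 = 0"
  "S4_M c p q s xi eta zeta U V 1 1 = 1 - c (q^2) * zeta"
  "S4_M c p q s xi eta zeta U V 1 2 = - eta"
  "S4_M c p q s xi eta zeta U V 1 3 = - (c p * V)"
  "S4_M c p q s xi eta zeta U V 2 0 = V"
  "S4_M c p q s xi eta zeta U V 2 1 = xi"
  "S4_M c p q s xi eta zeta U V 2 2 = c (s^2) + zeta"
  "S4_M c p q s xi eta zeta U V 2 3 = 0"
  "S4_M c p q s xi eta zeta U V 3 0 = - eta"
  "S4_M c p q s xi eta zeta U V 3 1 = - (c (inverse p) * U)"
  "S4_M c p q s xi eta zeta U V 3 2 = 0"
  "S4_M c p q s xi eta zeta U V 3 3 = c (s^2) + c (q^2) * zeta"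
  by (simp_all add: S4_M_def eval_nat_numeral)

lemma M2:
  fixes c :: "complex \<Rightarrow> 'a::ring_1"
  assumes hc: "central_complex_hom c"
    and "p \<noteq> 0" and "q \<noteq> 0"
    and R: "S4_rels c p q s xi eta zeta U V"
    and ij: "i < 4" "j < 4"
  shows "mat4_mult (S4_M c p q s xi eta zeta U V) (S4_M c p q s xi eta zeta U V) i j
     = c (1 + s^2) * S4_M c p q s xi eta zeta U V i j"
proof -
  have c1: "c 1 = 1" and cadd: "\<And>z w. c (z + w) = c z + c w" and cmul: "\<And>z w. c (z * w) = c z * c w"
    and ccom: "\<And>z x. c z * x = x * c z" using hc unfolding central_complex_hom_def by blast+
  have c0: "c 0 = 0" using cadd[of 0 0] by simp
  have cneg: "\<And>z. c (- z) = - c z" using cadd[of _ "- _"] c0 by (metis add.right_inverse eq_neg_iff_add_eq_0)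
  have cdiff: "\<And>z w. c (z - w) = c z - c w" by (simp only: diff_conv_add_uminus cadd cneg)
  have cmul2: "\<And>z w y. c z * (c w * y) = c (z * w) * y" using cmul by (simp add: mult.assoc)
  have cm2: "\<And>z x. x * c z = c z * x" using ccom by simp
  have cm1: "\<And>z x y. x * (c z * y) = c z * (x * y)"
  proof -
    fix z x y
    have "x * (c z * y) = (x * c z) * y" by (simp add: mult.assoc)
    also have "\<dots> = c z * (x * y)" by (simp add: cm2 mult.assoc)
    finally show "x * (c z * y) = c z * (x * y)" .
  qed
  note cm = cm1[where x=xi] cm1[where x=eta] cm1[where x=zeta] cm1[where x=U] cm1[where x=V]
     cm2[where x=xi] cm2[where x=eta] cm2[where x=zeta] cm2[where x=U] cm2[where x=V]
  have r: "zeta * xi = c (q^2) * xi * zeta" "eta * zeta = c (q^2) * zeta * eta"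
     "xi * U = c p * U * xi" "V * xi = c p * xi * V"
     "eta * V = c p * V * eta" "U * eta = c p * eta * U"
     "U * V = V * U" "U * zeta = zeta * U" "V * zeta = zeta * V"
     "xi * eta = (zeta - 1) * (zeta + c (s^2)) + U * V"
     "eta * xi = (c (q^2) * zeta - 1) * (c (q^2) * zeta + c (s^2)) + U * V"
    using R unfolding S4_rels_def by auto
  have ip: "c (inverse p) * c p = 1" "c p * c (inverse p) = 1" using \<open>p \<noteq> 0\<close> by (simp_all flip: cmul add: c1)
  have iq: "c (inverse (q^2)) * c (q^2) = 1" using \<open>q \<noteq> 0\<close> by (simp flip: cmul add: c1)
  have n1: "zeta * xi = c (q^2) * (xi * zeta)" using r(1) by (simp add: mult.assoc)
  have n2: "zeta * eta = c (inverse (q^2)) * (eta * zeta)"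
  proof -
    have "c (inverse (q^2)) * (eta * zeta) = c (inverse (q^2)) * (c (q^2) * (zeta * eta))" using r(2) by (simp add: mult.assoc)
    also have "\<dots> = zeta * eta" using iq by (simp flip: mult.assoc)
    finally show ?thesis by simp
  qed
  have n3: "U * xi = c (inverse p) * (xi * U)"
  proof -
    have "c (inverse p) * (xi * U) = c (inverse p) * (c p * (U * xi))" using r(3) by (simp add: mult.assoc)
    also have "\<dots> = U * xi" using ip by (simp flip: mult.assoc)
    finally show ?thesis by simp
  qed
  have n4: "V * xi = c p * (xi * V)" using r(4) by (simp add: mult.assoc)
  have n5: "V * eta = c (inverse p) * (eta * V)"
  proof -
    have "c (inverse p) * (eta * V) = c (inverse p) * (c p * (V * eta))" using r(5) by (simp add: mult.assoc)
    also have "\<dots> = V * eta" using ip by (simp flip: mult.assoc)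
    finally show ?thesis by simp
  qed
  have n6: "U * eta = c p * (eta * U)" using r(6) by (simp add: mult.assoc)
  have n7: "V * U = U * V" "V * zeta = zeta * V" "U * zeta = zeta * U" using r by auto
  note N = n1 n2 n3 n4 n5 n6 n7 r(10) r(11)
  have NN: "\<And>y. zeta * (xi * y) = c (q^2) * (xi * (zeta * y))"
    "\<And>y. zeta * (eta * y) = c (inverse (q^2)) * (eta * (zeta * y))"
    "\<And>y. U * (xi * y) = c (inverse p) * (xi * (U * y))"
    "\<And>y. V * (xi * y) = c p * (xi * (V * y))"
    "\<And>y. V * (eta * y) = c (inverse p) * (eta * (V * y))"
    "\<And>y. U * (eta * y) = c p * (eta * (U * y))"
    "\<And>y. V * (U * y) = U * (V * y)" "\<And>y. V * (zeta * y) = zeta * (V * y)" "\<And>y. U * (zeta * y) = zeta * (U * y)"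
    "\<And>y. xi * (eta * y) = ((zeta - 1) * (zeta + c (s^2)) + U * V) * y"
    "\<And>y. eta * (xi * y) = ((c (q^2) * zeta - 1) * (c (q^2) * zeta + c (s^2)) + U * V) * y"
    using N by (simp_all flip: mult.assoc)
  have cc: "\<And>z w. c z * c w = c (z * w)" using cmul by simp
  have I: "i = 0 \<or> i = 1 \<or> i = 2 \<or> i = 3" "j = 0 \<or> j = 1 \<or> j = 2 \<or> j = 3" using ij by auto
  from I show ?thesis
    unfolding mat4_mult_def sum4
    apply (elim disjE; simp only: Mval mult_zero_left mult_zero_right add_0_left add_0_right)
    apply (simp_all add: algebra_simps N NN cm cmul2 cadd cdiff cneg c1 c0 cc \<open>p\<noteq>0\<close> \<open>q\<noteq>0\<close>)
    done
qed

lemma Mstar: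
  fixes c :: "complex \<Rightarrow> 'a::ring_1"
  assumes hc: "central_complex_hom c" and "p \<noteq> 0"
    and h: "Im (q^2) = 0" "Im (s^2) = 0" "cmod p = 1" "algebra_involution c st"
             "st zeta = zeta" "st xi = - eta" "st U = V"
    and ij: "i < 4" "j < 4"
  shows "st (S4_M c p q s xi eta zeta U V j i) = S4_M c p q s xi eta zeta U V i j"
proof -
  have c1: "c 1 = 1" and cadd: "\<And>z w. c (z + w) = c z + c w" and cmul: "\<And>z w. c (z * w) = c z * c w"
    and ccom: "\<And>z x. c z * x = x * c z" using hc unfolding central_complex_hom_def by blast+
  have sadd: "\<And>x y. st (x + y) = st x + st y" and smul: "\<And>x y. st (x * y) = st y * st x"
    and sst: "\<And>x. st (st x) = x" and sc: "\<And>z x. st (c z * x) = c (cnj z) * st x"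
    using h(4) unfolding algebra_involution_def by blast+
  have s1: "st 1 = 1"
  proof -
    have "st 1 = st 1 * st (st 1)" by (simp only: sst mult_1_right)
    also have "\<dots> = st (st 1 * 1)" by (simp only: smul)
    also have "\<dots> = 1" by (simp only: mult_1_right sst)
    finally show ?thesis .
  qed
  have s0: "st 0 = 0" using sadd[of 0 0] by simp
  have sneg: "\<And>x. st (- x) = - st x" 
  proof -
    fix x
    have "st x + st (- x) = 0" using sadd[of x "- x"] s0 by simp
    thus "st (- x) = - st x" by (simp add: eq_neg_iff_add_eq_0 add.commute)
  qed
  have sdiff: "\<And>x y. st (x - y) = st x - st y" by (simp only: diff_conv_add_uminus sadd sneg)
  have sc1: "\<And>z. st (c z) = c (cnj z)" using sc[of _ 1] s1 by simp
  have sV: "st V = U" using sst[of U] h(7) by simp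
  have seta: "st eta = - xi"
  proof -
    have "st (- eta) = xi" using sst[of xi] h(6) by simp
    thus ?thesis using sneg[of eta] by (simp add: minus_equation_iff)
  qed
  have gen: "\<And>z. Im z = 0 \<Longrightarrow> cnj z = z" by (simp add: complex_eq_iff)
  have cq: "cnj (q^2) = q^2" "cnj (s^2) = s^2" using h(1,2) by (simp_all only: gen)
  have cp: "cnj p = inverse p" "cnj (inverse p) = p" using h(3) \<open>p\<noteq>0\<close>
  proof -
    have "p * cnj p = 1" using complex_norm_square[of p] h(3) by simp
    hence a: "cnj p = inverse p" using \<open>p\<noteq>0\<close> by (simp add: field_simps)
    thus "cnj p = inverse p" .
    show "cnj (inverse p) = p" using a by (simp add: complex_cnj_inverse)
  qed
  have cq2: "(cnj q)^2 = q^2" "(cnj s)^2 = s^2" using cq by simp_all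
  have I: "i = 0 \<or> i = 1 \<or> i = 2 \<or> i = 3" "j = 0 \<or> j = 1 \<or> j = 2 \<or> j = 3" using ij by auto
  from I show ?thesis
    apply (elim disjE; simp only: Mval)
    apply (simp_all add: sadd sdiff sneg s0 s1 sc sc1 sV seta h(5-7) cq cq2 cp)
    done
qed
theorem mainTheorem1:
  fixes c :: "complex \<Rightarrow> 'a::ring_1"
    and p q s :: complex
    and xi eta zeta U V :: 'a
  assumes "central_complex_hom c"
    and "p \<noteq> 0" and "q \<noteq> 0" and "s^2 \<noteq> -1"
    and "S4_rels c p q s xi eta zeta U V"
  shows "mat4_eq (mat4_mult (S4_e c p q s xi eta zeta U V) (S4_e c p q s xi eta zeta U V))
                 (S4_e c p q s xi eta zeta U V)
     \<and> (\<forall>st. Im (q^2) = 0 \<and> Im (s^2) = 0 \<and> cmod p = 1 \<and> algebra_involution c st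
             \<and> st zeta = zeta \<and> st xi = - eta \<and> st U = V
           \<longrightarrow> mat4_eq (mat4_star st (S4_e c p q s xi eta zeta U V)) (S4_e c p q s xi eta zeta U V))"
proof -
  let ?M = "S4_M c p q s xi eta zeta U V"
  define k where "k = inverse (1 + s^2)"
  have c1: "c 1 = 1" and cmul: "\<And>z w. c (z * w) = c z * c w"
    and ccom: "\<And>z x. c z * x = x * c z" using assms(1) unfolding central_complex_hom_def by blast+
  have nz: "1 + s^2 \<noteq> 0" using assms(4) by (metis add.commute add_eq_0_iff)
  have kk: "c k * c k * c (1 + s^2) = c k"
  proof -
    have k1: "k * (1 + s^2) = 1" unfolding k_def using nz by simp
    have kk0: "k * k * (1 + s^2) = k" by (metis mult.assoc k1 mult_1_right)
    moreover have "c k * c k * c (1 + s^2) = c (k * k * (1 + s^2))" by (simp only: cmul)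
    ultimately show ?thesis by (simp only: kk0)
  qed
  have A: "mat4_mult (S4_e c p q s xi eta zeta U V) (S4_e c p q s xi eta zeta U V) i j
        = S4_e c p q s xi eta zeta U V i j" if ij: "i < 4" "j < 4" for i j
  proof -
    have "\<And>a b. c k * a * (c k * b) = c k * c k * (a * b)"
    proof -
      fix a b
      have "c k * a * (c k * b) = c k * ((a * c k) * b)" by (simp add: mult.assoc)
      also have "\<dots> = c k * ((c k * a) * b)" by (simp only: ccom)
      finally show "c k * a * (c k * b) = c k * c k * (a * b)" by (simp add: mult.assoc)
    qed
    note E = this
    have "mat4_mult (S4_e c p q s xi eta zeta U V) (S4_e c p q s xi eta zeta U V) i j
        = (\<Sum>m<4. c k * ?M i m * (c k * ?M m j))"
      unfolding mat4_mult_def S4_e_def k_def by (rule refl)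
    also have "\<dots> = (\<Sum>m<4. c k * c k * (?M i m * ?M m j))" by (rule sum.cong[OF refl], rule E)
    also have "\<dots> = c k * c k * mat4_mult ?M ?M i j"
      unfolding mat4_mult_def by (rule sum_distrib_left[symmetric])
    finally have "mat4_mult (S4_e c p q s xi eta zeta U V) (S4_e c p q s xi eta zeta U V) i j
        = c k * c k * mat4_mult ?M ?M i j" .
    also have "\<dots> = c k * c k * (c (1 + s^2) * ?M i j)"
      using M2[OF assms(1,2,3,5) ij] by simp
    also have "\<dots> = c k * ?M i j" using kk by (simp add: mult.assoc[symmetric])
    finally show ?thesis unfolding S4_e_def k_def .
  qed
  have B: "mat4_star st (S4_e c p q s xi eta zeta U V) i j = S4_e c p q s xi eta zeta U V i j"
    if h: "Im (q^2) = 0" "Im (s^2) = 0" "cmod p = 1" "algebra_involution c st"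
             "st zeta = zeta" "st xi = - eta" "st U = V" and ij: "i < 4" "j < 4" for st i j
  proof -
    have sc: "\<And>z x. st (c z * x) = c (cnj z) * st x" using h(4) unfolding algebra_involution_def by auto
    have gen: "\<And>z. Im z = 0 \<Longrightarrow> cnj z = z" by (simp add: complex_eq_iff)
    have cs: "cnj (s^2) = s^2" by (rule gen) (rule h(2))
    have "cnj k = k" unfolding k_def by (simp only: complex_cnj_inverse complex_cnj_add complex_cnj_one cs)
    thus ?thesis unfolding mat4_star_def S4_e_def k_def[symmetric]
      using sc Mstar[OF assms(1,2) h ij] by simp
  qed
  show ?thesis unfolding mat4_eq_def using A B by blast
qed

end
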